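(* Let $\mu_1,\mu_2$ be two mass distributions in $\mathbb{R}^2$ and let $q$ be a point of $\mathbb{R}^2$. Then there exist two lines $\ell_1,\ell_2$ such that $\{\ell_1,\ell_2\}$ simultaneously bisects $\mu_1,\mu_2$, and both $\ell_1$ and $\ell_2$ go through $q$.
   Context: A mass distribution $\mu$ on $\mathbb{R}^2$ is a measure such that all open subsets are measurable, $0<\mu(\mathbb{R}^2)<\infty$, and $\mu(S)=0$ for every lower-dimensional subset $S$. For a finite set $\mathcal{L}$ of oriented lines, each $\ell\in\mathcal{L}$ has positive side $\ell^+=\{x: g(x)\ge 0\}$ for a defining affine function $g$. Let $\lambda(p)$ be the number of lines of $\mathcal{L}$ having $p$ on their positive side, $R^+=\{p:\lambda(p)\text{ even}\}$, $R^-=\{p:\lambda(p)\text{ odd}\}$. $\mathcal{L}$ simultaneously bisects $\mu_1,\dots,\mu_k$ if $\mu_i(R^+)=\mu_i(R^-)$ for all $i$; an unoriented set of lines bisects if some orientation does. *)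

theory Defs
  imports "HOL-Analysis.Analysis"
begin

text \<open>Mass distribution on the plane (points are of type real^2).
  Lower-dimensional sets = (measurable) sets whose affine dimension is below 2.\<close>
definition mass_distribution :: "(real^2) measure \<Rightarrow> bool" where
  "mass_distribution M \<longleftrightarrow>
     space M = UNIV \<and>
     (\<forall>S. open S \<longrightarrow> S \<in> sets M) \<and>
     0 < emeasure M UNIV \<and> emeasure M UNIV < \<infinity> \<and>
     (\<forall>S \<in> sets M. aff_dim S < 2 \<longrightarrow> emeasure M S = 0)"

text \<open>An oriented line is given by its defining affine function g(x) = a \<bullet> x + b, a \<noteq> 0.
  A finite family of oriented lines is given as a list of such pairs.\<close>
definition oriented_line :: "(real^2) \<times> real \<Rightarrow> bool" where
  "oriented_line l \<longleftrightarrow> fst l \<noteq> 0"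

definition line_set :: "(real^2) \<times> real \<Rightarrow> (real^2) set" where
  "line_set l = {x. fst l \<bullet> x + snd l = 0}"

definition pos_side :: "(real^2) \<times> real \<Rightarrow> (real^2) set" where
  "pos_side l = {x. fst l \<bullet> x + snd l \<ge> 0}"

definition lambda_count :: "((real^2) \<times> real) list \<Rightarrow> real^2 \<Rightarrow> nat" where
  "lambda_count Ls p = length (filter (\<lambda>l. p \<in> pos_side l) Ls)"

definition R_plus :: "((real^2) \<times> real) list \<Rightarrow> (real^2) set" where
  "R_plus Ls = {p. even (lambda_count Ls p)}"

definition R_minus :: "((real^2) \<times> real) list \<Rightarrow> (real^2) set" where
  "R_minus Ls = {p. odd (lambda_count Ls p)}"

definition bisects :: "((real^2) \<times> real) list \<Rightarrow> (real^2) measure \<Rightarrow> bool" where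
  "bisects Ls M \<longleftrightarrow> emeasure M (R_plus Ls) = emeasure M (R_minus Ls)"

end

theory Submission
  imports Defs
begin

definition nrm :: "real \<Rightarrow> real^2" where "nrm t = vector [- sin t, cos t]"
definition sg :: "real^2 \<Rightarrow> real \<Rightarrow> real^2 \<Rightarrow> bool" where "sg q t y \<longleftrightarrow> nrm t \<bullet> (y - q) \<ge> 0"
definition Rm :: "real^2 \<Rightarrow> real \<Rightarrow> real \<Rightarrow> (real^2) set" where "Rm q a b = {y. sg q a y \<noteq> sg q b y}"
definition lin :: "real^2 \<Rightarrow> real \<Rightarrow> (real^2) set" where "lin q t = {y. nrm t \<bullet> (y - q) = 0}"
definition W :: "(real^2) measure \<Rightarrow> real^2 \<Rightarrow> real \<Rightarrow> real \<Rightarrow> real" where "W M q a b = measure M (Rm q a b)"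

lemma nrm_inner: "nrm t \<bullet> z = - sin t * z$1 + cos t * z$2"
  by (simp add: nrm_def inner_vec_def UNIV_2 vector_2)

lemma nrm_nz: "nrm t \<noteq> 0"
proof
  assume "nrm t = 0"
  moreover have "(nrm t)$1 = - sin t" "(nrm t)$2 = cos t" by (simp_all add: nrm_def)
  ultimately have "sin t = 0" "cos t = 0" by auto
  then show False using sin_cos_squared_add[of t] by simp
qed

lemma nrm_pi: "nrm (t + pi) = - nrm t"
  by (simp add: nrm_def sin_add cos_add vector_def vec_eq_iff forall_2)

lemma md_open: "mass_distribution M \<Longrightarrow> open S \<Longrightarrow> S \<in> sets M"
  by (simp add: mass_distribution_def)

lemma md_space: "mass_distribution M \<Longrightarrow> space M = UNIV"
  by (simp add: mass_distribution_def)

lemma md_closed: "mass_distribution M \<Longrightarrow> closed S \<Longrightarrow> S \<in> sets M"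
proof -
  assume a: "mass_distribution M" "closed S"
  then have "- S \<in> sets M" by (simp add: md_open open_Compl)
  then have "space M - (- S) \<in> sets M" by (rule sets.compl_sets)
  moreover have "space M - (- S) = S" using md_space[OF a(1)] by auto
  ultimately show ?thesis by simp
qed

lemma md_finite: "mass_distribution M \<Longrightarrow> finite_measure M"
  by (rule finite_measureI) (auto simp: mass_distribution_def)

lemma closed_half: "closed {y. sg q t y}"
proof -
  have "continuous_on UNIV (\<lambda>y::real^2. nrm t \<bullet> (y - q))" by (intro continuous_intros)
  then show ?thesis unfolding sg_def by (simp add: closed_Collect_le)
qed

lemma closed_lin: "closed (lin q t)"
proof -
  have "continuous_on UNIV (\<lambda>y::real^2. nrm t \<bullet> (y - q))" by (intro continuous_intros)
  then show ?thesis unfolding lin_def by (simp add: closed_Collect_eq)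
qed

lemma lin_null: assumes "mass_distribution M" shows "lin q t \<in> null_sets M"
proof -
  have eq: "lin q t = {y. nrm t \<bullet> y = nrm t \<bullet> q}"
    by (auto simp: lin_def inner_diff_right)
  have "aff_dim (lin q t) = 1" unfolding eq using nrm_nz[of t] by simp
  moreover have "lin q t \<in> sets M" using md_closed[OF assms closed_lin] .
  ultimately have "emeasure M (lin q t) = 0" using assms by (simp add: mass_distribution_def)
  then show ?thesis using \<open>lin q t \<in> sets M\<close> by (simp add: null_sets_def)
qed

lemma half_sets: "mass_distribution M \<Longrightarrow> {y. sg q t y} \<in> sets M"
  using md_closed closed_half by blast

lemma Rm_sets: assumes "mass_distribution M" shows "Rm q a b \<in> sets M"
proof -
  have "Rm q a b = ({y. sg q a y} - {y. sg q b y}) \<union> ({y. sg q b y} - {y. sg q a y})"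
    by (auto simp: Rm_def)
  then show ?thesis using half_sets[OF assms] by auto
qed

lemma sg_pi: "y \<notin> lin q t \<Longrightarrow> sg q (t + pi) y \<longleftrightarrow> \<not> sg q t y"
  by (auto simp: sg_def lin_def nrm_pi)

lemma W_diag: "W M q a a = 0"
  by (simp add: W_def Rm_def)

lemma W_pi: assumes "mass_distribution M" shows "W M q a (a + pi) = measure M UNIV"
proof -
  have "AE x in M. x \<in> Rm q a (a + pi) \<longleftrightarrow> x \<in> UNIV"
    by (rule AE_I'[OF lin_null[OF assms, of q a]]) (auto simp: Rm_def sg_def lin_def nrm_pi)
  then show ?thesis unfolding W_def
    by (rule measure_eq_AE) (use Rm_sets[OF assms] md_space[OF assms] sets.top[of M] in auto)
qed

lemma W_per: assumes "mass_distribution M" shows "W M q (a + pi) (b + pi) = W M q a b"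
proof -
  have "AE x in M. x \<in> Rm q (a + pi) (b + pi) \<longleftrightarrow> x \<in> Rm q a b"
    by (rule AE_I'[OF null_sets.Un[OF lin_null[OF assms, of q a] lin_null[OF assms, of q b]]])
       (auto simp: Rm_def sg_def lin_def nrm_pi)
  then show ?thesis unfolding W_def
    by (rule measure_eq_AE) (use Rm_sets[OF assms] in auto)
qed

lemma sin_identity:
  "sin (c - b) * (nrm a \<bullet> z) - sin (c - a) * (nrm b \<bullet> z) + sin (b - a) * (nrm c \<bullet> z) = 0"
  by (simp add: nrm_inner sin_diff algebra_simps)

lemma sin_nonneg_zero: "0 \<le> x \<Longrightarrow> x \<le> pi \<Longrightarrow> 0 \<le> sin x \<and> (sin x = 0 \<longleftrightarrow> x = 0 \<or> x = pi)"
  using sin_ge_zero[of x] sin_gt_zero[of x] by force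

lemma three:
  assumes "a \<le> b" "b \<le> c" "c \<le> a + pi" "y \<notin> lin q a" "y \<notin> lin q b" "y \<notin> lin q c"
  shows "\<not> (sg q a y \<noteq> sg q b y \<and> sg q b y \<noteq> sg q c y)"
proof
  assume h: "sg q a y \<noteq> sg q b y \<and> sg q b y \<noteq> sg q c y"
  define z where "z = y - q"
  define A where "A = nrm a \<bullet> z"
  define B where "B = nrm b \<bullet> z"
  define C where "C = nrm c \<bullet> z"
  have nz: "A \<noteq> 0" "B \<noteq> 0" "C \<noteq> 0" using assms(4-6) by (auto simp: lin_def A_def B_def C_def z_def)
  have sg: "(A \<ge> 0) \<noteq> (B \<ge> 0)" "(B \<ge> 0) \<noteq> (C \<ge> 0)" using h by (auto simp: sg_def A_def B_def C_def z_def)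
  have id: "sin (c - b) * A - sin (c - a) * B + sin (b - a) * C = 0"
    unfolding A_def B_def C_def by (rule sin_identity)
  have s1: "0 \<le> sin (c - b) \<and> (sin (c - b) = 0 \<longleftrightarrow> c - b = 0 \<or> c - b = pi)"
    by (rule sin_nonneg_zero) (use assms in auto)
  have s2: "0 \<le> sin (c - a) \<and> (sin (c - a) = 0 \<longleftrightarrow> c - a = 0 \<or> c - a = pi)"
    by (rule sin_nonneg_zero) (use assms in auto)
  have s3: "0 \<le> sin (b - a) \<and> (sin (b - a) = 0 \<longleftrightarrow> b - a = 0 \<or> b - a = pi)"
    by (rule sin_nonneg_zero) (use assms in auto)
  have AC: "(A > 0 \<and> C > 0 \<and> B < 0) \<or> (A < 0 \<and> C < 0 \<and> B > 0)" using nz sg by auto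
  have "sin (c - b) * A + sin (b - a) * C = sin (c - a) * B" using id by simp
  then have z3: "sin (c - a) = 0 \<and> sin (c - b) = 0 \<and> sin (b - a) = 0"
    using AC s1 s2 s3
    by (smt (verit) mult_nonneg_nonneg mult_nonneg_nonpos mult_pos_pos zero_less_mult_iff mult_less_0_iff)
  show False
  proof (cases "c = a")
    case True
    then have "a = b" using assms by auto
    then have "A = B" by (simp add: A_def B_def)
    then show False using sg by auto
  next
    case False
    then have "c = a + pi" using z3 s2 by auto
    then have "C = - A" by (simp add: C_def A_def nrm_pi)
    then show False using AC by auto
  qed
qed

lemma W_add:
  assumes md: "mass_distribution M" and "a \<le> b" "b \<le> c" "c \<le> a + pi"
  shows "W M q a c = W M q a b + W M q b c"
proof -
  interpret finite_measure M by (rule md_finite[OF md])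
  have N: "lin q a \<union> lin q b \<union> lin q c \<in> null_sets M"
    using lin_null[OF md] by (intro null_sets.Un) auto
  have T: "sg q a x = sg q b x \<or> sg q b x = sg q c x" if "x \<notin> lin q a" "x \<notin> lin q b" "x \<notin> lin q c" for x
    using three[OF assms(2-4), of x] that by blast
  have "AE x in M. x \<in> Rm q a c \<longleftrightarrow> x \<in> Rm q a b \<union> Rm q b c"
    by (rule AE_I'[OF N]) (auto simp: Rm_def, (metis T)+)
  then have "measure M (Rm q a c) = measure M (Rm q a b \<union> Rm q b c)"
    by (rule measure_eq_AE) (use Rm_sets[OF md] in auto)
  also have "\<dots> = measure M (Rm q a b) + measure M (Rm q b c)"
  proof (rule measure_Un_AE)
    show "AE x in M. x \<notin> Rm q a b \<or> x \<notin> Rm q b c"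
    proof (rule AE_I'[OF N])
      show "{x \<in> space M. \<not> (x \<notin> Rm q a b \<or> x \<notin> Rm q b c)} \<subseteq> lin q a \<union> lin q b \<union> lin q c"
      proof
        fix x assume "x \<in> {x \<in> space M. \<not> (x \<notin> Rm q a b \<or> x \<notin> Rm q b c)}"
        then have "sg q a x \<noteq> sg q b x \<and> sg q b x \<noteq> sg q c x" by (auto simp: Rm_def)
        then show "x \<in> lin q a \<union> lin q b \<union> lin q c" using three[OF assms(2-4), of x] by blast
      qed
    qed
  qed (use Rm_sets[OF md] fmeasurable_eq_sets in auto)
  finally show ?thesis by (simp add: W_def)
qed

lemma sg_eventually:
  assumes "x \<notin> lin q t0" "t \<longlonglongrightarrow> t0"
  shows "eventually (\<lambda>n. sg q (t n) x = sg q t0 x) sequentially"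
proof -
  define z where "z = x - q"
  have "(\<lambda>n. - sin (t n) * z$1 + cos (t n) * z$2) \<longlonglongrightarrow> - sin t0 * z$1 + cos t0 * z$2"
    by (intro tendsto_intros assms(2))
  then have L: "(\<lambda>n. nrm (t n) \<bullet> z) \<longlonglongrightarrow> nrm t0 \<bullet> z" by (simp add: nrm_inner)
  have nz: "nrm t0 \<bullet> z \<noteq> 0" using assms(1) by (simp add: lin_def z_def)
  show ?thesis
  proof (cases "nrm t0 \<bullet> z > 0")
    case True
    have "eventually (\<lambda>n. nrm (t n) \<bullet> z > 0) sequentially" using order_tendstoD(1)[OF L True] .
    then show ?thesis by eventually_elim (use True in \<open>auto simp: sg_def z_def\<close>)
  next
    case False
    then have F: "nrm t0 \<bullet> z < 0" using nz by auto
    have "eventually (\<lambda>n. nrm (t n) \<bullet> z < 0) sequentially" using order_tendstoD(2)[OF L F] .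
    then show ?thesis by eventually_elim (use F in \<open>auto simp: sg_def z_def\<close>)
  qed
qed

lemma W_cont:
  assumes md: "mass_distribution M"
  shows "continuous_on UNIV (\<lambda>p::real\<times>real. W M q (fst p) (snd p))"
proof -
  interpret finite_measure M by (rule md_finite[OF md])
  have Wi: "W M q a b = integral\<^sup>L M (indicator (Rm q a b))" for a b
    by (simp add: W_def md_space[OF md])
  have "continuous (at p0) (\<lambda>p::real\<times>real. W M q (fst p) (snd p))" for p0
  proof (rule continuous_at_sequentiallyI)
    fix u :: "nat \<Rightarrow> real \<times> real" assume u: "u \<longlonglongrightarrow> p0"
    have u1: "(\<lambda>n. fst (u n)) \<longlonglongrightarrow> fst p0" and u2: "(\<lambda>n. snd (u n)) \<longlonglongrightarrow> snd p0"
      using u by (auto intro: tendsto_fst tendsto_snd)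
    have N: "lin q (fst p0) \<union> lin q (snd p0) \<in> null_sets M"
      using lin_null[OF md] by (intro null_sets.Un) auto
    have "(\<lambda>n. integral\<^sup>L M (indicator (Rm q (fst (u n)) (snd (u n))) :: real^2 \<Rightarrow> real))
        \<longlonglongrightarrow> integral\<^sup>L M (indicator (Rm q (fst p0) (snd p0)))"
    proof (rule integral_dominated_convergence[where w="\<lambda>_. 1"])
      show "indicator (Rm q (fst p0) (snd p0)) \<in> borel_measurable M"
        using Rm_sets[OF md] by (rule borel_measurable_indicator)
      show "indicator (Rm q (fst (u n)) (snd (u n))) \<in> borel_measurable M" for n
        using Rm_sets[OF md] by (rule borel_measurable_indicator)
      show "integrable M (\<lambda>_. 1::real)" by simp
      show "AE x in M. norm (indicator (Rm q (fst (u n)) (snd (u n))) x :: real) \<le> 1" for n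
        by (auto simp: indicator_def)
      show "AE x in M. (\<lambda>n. indicator (Rm q (fst (u n)) (snd (u n))) x :: real)
          \<longlonglongrightarrow> indicator (Rm q (fst p0) (snd p0)) x"
      proof (rule AE_I'[OF N], safe)
        fix x assume x: "x \<in> space M"
          "\<not> (\<lambda>n. indicator (Rm q (fst (u n)) (snd (u n))) x :: real) \<longlonglongrightarrow> indicator (Rm q (fst p0) (snd p0)) x"
          "x \<notin> lin q (snd p0)"
        show "x \<in> lin q (fst p0)"
        proof (rule ccontr)
          assume "x \<notin> lin q (fst p0)"
          from sg_eventually[OF this u1] sg_eventually[OF x(3) u2]
          have "eventually (\<lambda>n. (indicator (Rm q (fst (u n)) (snd (u n))) x :: real) = indicator (Rm q (fst p0) (snd p0)) x) sequentially"
            by eventually_elim (simp add: Rm_def indicator_def)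
          then have "(\<lambda>n. indicator (Rm q (fst (u n)) (snd (u n))) x :: real) \<longlonglongrightarrow> indicator (Rm q (fst p0) (snd p0)) x"
            by (rule tendsto_eventually)
          then show False using x(2) by simp
        qed
      qed
    qed
    then show "(\<lambda>n. W M q (fst (u n)) (snd (u n))) \<longlonglongrightarrow> W M q (fst p0) (snd p0)"
      by (simp add: Wi)
  qed
  then show ?thesis by (simp add: continuous_at_imp_continuous_on)
qed

lemma clamp_fix:
  fixes a b x f :: real
  assumes "a \<le> x" "x \<le> b" "max a (min b (x - f)) = x" "x = a \<Longrightarrow> f \<le> 0" "x = b \<Longrightarrow> f \<ge> 0"
  shows "f = 0"
  using assms by (cases "x = a"; cases "x = b") (auto simp: max_def min_def split: if_splits)

lemma miranda:
  fixes F :: "real \<times> real \<Rightarrow> real \<times> real"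
  assumes "x0 \<le> x1" "y0 \<le> y1" and cont: "continuous_on ({x0..x1} \<times> {y0..y1}) F"
    and ex: "\<And>y. y0 \<le> y \<Longrightarrow> y \<le> y1 \<Longrightarrow> fst (F (x0, y)) \<le> 0 \<and> fst (F (x1, y)) \<ge> 0"
    and ey: "\<And>x. x0 \<le> x \<Longrightarrow> x \<le> x1 \<Longrightarrow> snd (F (x, y0)) \<le> 0 \<and> snd (F (x, y1)) \<ge> 0"
  shows "\<exists>x y. x0 \<le> x \<and> x \<le> x1 \<and> y0 \<le> y \<and> y \<le> y1 \<and> F (x, y) = (0, 0)"
proof -
  define S where "S = {x0..x1} \<times> {y0..y1}"
  define G where "G p = (max x0 (min x1 (fst p - fst (F p))), max y0 (min y1 (snd p - snd (F p))))" for p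
  have S: "compact S" "convex S" "S \<noteq> {}" using assms(1,2)
    by (auto simp: S_def compact_Times convex_Times)
  have "continuous_on S G" unfolding G_def S_def
    by (intro continuous_intros continuous_on_fst continuous_on_snd cont continuous_on_id)
  moreover have "G \<in> S \<rightarrow> S" using assms(1,2) by (auto simp: G_def S_def)
  ultimately obtain p where p: "p \<in> S" "G p = p" using brouwer[OF S] by blast
  obtain x y where xy: "p = (x, y)" by (cases p)
  have r: "x0 \<le> x" "x \<le> x1" "y0 \<le> y" "y \<le> y1" using p(1) by (auto simp: xy S_def)
  have g1: "max x0 (min x1 (x - fst (F (x, y)))) = x" and g2: "max y0 (min y1 (y - snd (F (x, y)))) = y"
    using p(2) by (auto simp: G_def xy)
  have "fst (F (x, y)) = 0"
    by (rule clamp_fix[OF r(1,2) g1]) (use ex r in auto)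
  moreover have "snd (F (x, y)) = 0"
    by (rule clamp_fix[OF r(3,4) g2]) (use ey r in auto)
  ultimately show ?thesis using r by (intro exI[of _ x] exI[of _ y]) (auto simp: prod_eq_iff)
qed

definition ln :: "real^2 \<Rightarrow> real \<Rightarrow> (real^2) \<times> real" where "ln q t = (nrm t, - (nrm t \<bullet> q))"

lemma pos_side_ln: "pos_side (ln q t) = {y. sg q t y}"
  by (auto simp: pos_side_def ln_def sg_def inner_diff_right)

lemma R_minus_ln: "R_minus [ln q a, ln q b] = Rm q a b"
  by (auto simp: R_minus_def Rm_def lambda_count_def pos_side_ln)

lemma R_plus_ln: "R_plus [ln q a, ln q b] = - Rm q a b"
  by (auto simp: R_plus_def Rm_def lambda_count_def pos_side_ln)

lemma md_T: assumes "mass_distribution M" shows "measure M UNIV > 0"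
proof -
  interpret finite_measure M by (rule md_finite[OF assms])
  have "0 < emeasure M UNIV" using assms by (simp add: mass_distribution_def)
  then show ?thesis using emeasure_eq_measure[of UNIV] by simp
qed

lemma bis:
  assumes md: "mass_distribution M" and h: "W M q a b = measure M UNIV / 2"
  shows "bisects [ln q a, ln q b] M"
proof -
  interpret finite_measure M by (rule md_finite[OF md])
  have sp: "space M = UNIV" by (rule md_space[OF md])
  have "measure M (- Rm q a b) = measure M (space M - Rm q a b)" by (simp add: sp Compl_eq_Diff_UNIV)
  also have "\<dots> = measure M UNIV - measure M (Rm q a b)"
    using finite_measure_compl[OF Rm_sets[OF md]] sp by simp
  finally have "measure M (- Rm q a b) = measure M (Rm q a b)" using h by (simp add: W_def)
  then show ?thesis
    by (simp add: bisects_def R_plus_ln R_minus_ln emeasure_eq_measure)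
qed

lemma W_shift:
  assumes md: "mass_distribution M" and "0 \<le> x" "x \<le> pi" "0 \<le> y" "y \<le> pi"
  shows "W M q x (x + y) = (if x + y \<le> pi then W M q 0 (x + y) else measure M UNIV + W M q 0 (x + y - pi)) - W M q 0 x"
proof (cases "x + y \<le> pi")
  case True
  have "W M q 0 (x + y) = W M q 0 x + W M q x (x + y)"
    by (rule W_add[OF md]) (use assms True in auto)
  then show ?thesis using True by simp
next
  case False
  have e1: "W M q 0 pi = W M q 0 x + W M q x pi"
    by (rule W_add[OF md]) (use assms in auto)
  have e2: "W M q x (x + y) = W M q x pi + W M q pi (x + y)"
    by (rule W_add[OF md]) (use assms False in auto)
  have e3: "W M q pi (x + y) = W M q 0 (x + y - pi)"
    using W_per[OF md, of q 0 "x + y - pi"] by simp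
  have e4: "W M q 0 pi = measure M UNIV" using W_pi[OF md, of q 0] by simp
  show ?thesis using False e1 e2 e3 e4 by simp
qed

lemma W_cont2:
  assumes md: "mass_distribution M"
  shows "continuous_on S (\<lambda>p::real\<times>real. W M q (fst p) (fst p + snd p))"
proof -
  have "continuous_on UNIV (\<lambda>p::real\<times>real. (fst p, fst p + snd p))"
    by (intro continuous_intros)
  from continuous_on_compose2[OF W_cont[OF md, of q] this] 
  have "continuous_on UNIV (\<lambda>p::real\<times>real. W M q (fst p) (fst p + snd p))" by simp
  then show ?thesis by (rule continuous_on_subset) auto
qed

lemma line_set_ln: "line_set (ln q t) = {z. nrm t \<bullet> (z - q) = 0}"
  by (auto simp: line_set_def ln_def inner_diff_right)

theorem theorem5:
  fixes \<mu>1 \<mu>2 :: "(real^2) measure" and q :: "real^2"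
  assumes "mass_distribution \<mu>1" and "mass_distribution \<mu>2"
  shows "\<exists>l1 l2. oriented_line l1 \<and> oriented_line l2 \<and>
           line_set l1 \<noteq> line_set l2 \<and>
           q \<in> line_set l1 \<and> q \<in> line_set l2 \<and>
           bisects [l1, l2] \<mu>1 \<and> bisects [l1, l2] \<mu>2"
proof -
  note md1 = assms(1) and md2 = assms(2)
  define T1 where "T1 = measure \<mu>1 UNIV"
  define T2 where "T2 = measure \<mu>2 UNIV"
  have T1: "T1 > 0" and T2: "T2 > 0" using md_T[OF md1] md_T[OF md2] by (auto simp: T1_def T2_def)
  define V1 where "V1 a b = W \<mu>1 q a b / T1" for a b
  define V2 where "V2 a b = W \<mu>2 q a b / T2" for a b
  define D where "D t = V1 0 t - V2 0 t" for t
  define E where "E t = (if t \<le> pi then D t else D (t - pi))" for t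
  have c1: "continuous_on UNIV (\<lambda>p::real\<times>real. V1 (fst p) (fst p + snd p))"
    unfolding V1_def using T1 by (intro continuous_intros W_cont2[OF md1]) auto
  have c2: "continuous_on UNIV (\<lambda>p::real\<times>real. V2 (fst p) (fst p + snd p))"
    unfolding V2_def using T2 by (intro continuous_intros W_cont2[OF md2]) auto
  have "continuous_on UNIV (\<lambda>t::real. (0::real, t))" by (intro continuous_intros)
  from continuous_on_compose2[OF c1 this] continuous_on_compose2[OF c2 this]
  have "continuous_on UNIV D" unfolding D_def by (intro continuous_intros) auto
  then have Dc: "continuous_on {0..pi} D" by (rule continuous_on_subset) auto
  obtain a where a: "a \<in> {0..pi}" "\<And>t. t \<in> {0..pi} \<Longrightarrow> D t \<le> D a"
    using continuous_attains_sup[OF compact_Icc _ Dc] by auto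
  obtain b where b: "b \<in> {0..pi}" "\<And>t. t \<in> {0..pi} \<Longrightarrow> D b \<le> D t"
    using continuous_attains_inf[OF compact_Icc _ Dc] by auto
  have Vs1: "V1 x (x + y) = (if x + y \<le> pi then V1 0 (x + y) else 1 + V1 0 (x + y - pi)) - V1 0 x"
    if "0 \<le> x" "x \<le> pi" "0 \<le> y" "y \<le> pi" for x y
    using W_shift[OF md1 that, of q] T1 by (simp add: V1_def T1_def diff_divide_distrib add_divide_distrib)
  have Vs2: "V2 x (x + y) = (if x + y \<le> pi then V2 0 (x + y) else 1 + V2 0 (x + y - pi)) - V2 0 x"
    if "0 \<le> x" "x \<le> pi" "0 \<le> y" "y \<le> pi" for x y
    using W_shift[OF md2 that, of q] T2 by (simp add: V2_def T2_def diff_divide_distrib add_divide_distrib)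
  have dform: "V1 x (x + y) - V2 x (x + y) = E (x + y) - D x"
    if "0 \<le> x" "x \<le> pi" "0 \<le> y" "y \<le> pi" for x y
    using Vs1[OF that] Vs2[OF that] by (simp add: E_def D_def)
  have Eb: "D b \<le> E t \<and> E t \<le> D a" if "0 \<le> t" "t \<le> 2 * pi" for t
    using a(2)[of t] b(2)[of t] a(2)[of "t - pi"] b(2)[of "t - pi"] that by (auto simp: E_def)
  have V0: "V1 x (x + 0) = 0" "V2 x (x + 0) = 0" for x by (simp_all add: V1_def V2_def W_diag)
  have Vpi: "V1 x (x + pi) = 1" "V2 x (x + pi) = 1" for x
    using T1 T2 by (simp_all add: V1_def V2_def W_pi md1 md2 T1_def T2_def)
  define \<sigma> where "\<sigma> = (if a \<le> b then 1 else -1::real)"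
  define F where "F p = (\<sigma> * (V1 (fst p) (fst p + snd p) - V2 (fst p) (fst p + snd p)),
                         V1 (fst p) (fst p + snd p) + V2 (fst p) (fst p + snd p) - 1)" for p :: "real \<times> real"
  have Fc: "continuous_on ({min a b..max a b} \<times> {0..pi}) F"
    unfolding F_def by (intro continuous_intros continuous_on_subset[OF c1] continuous_on_subset[OF c2]) auto
  have "\<exists>x y. min a b \<le> x \<and> x \<le> max a b \<and> 0 \<le> y \<and> y \<le> pi \<and> F (x, y) = (0, 0)"
  proof (rule miranda[OF _ _ Fc])
    fix y :: real assume y: "0 \<le> y" "y \<le> pi"
    have da: "V1 a (a + y) - V2 a (a + y) \<le> 0" using dform[of a y] Eb[of "a + y"] a(1) y by auto
    have db: "V1 b (b + y) - V2 b (b + y) \<ge> 0" using dform[of b y] Eb[of "b + y"] b(1) y by auto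
    show "fst (F (min a b, y)) \<le> 0 \<and> fst (F (max a b, y)) \<ge> 0"
      using da db by (cases "a \<le> b") (auto simp: F_def \<sigma>_def min_def max_def)
  next
    fix x :: real
    show "snd (F (x, 0)) \<le> 0 \<and> snd (F (x, pi)) \<ge> 0" using V0[of x] Vpi[of x] by (simp add: F_def)
  qed (auto simp: min_def max_def)
  then obtain x y where xy: "min a b \<le> x" "x \<le> max a b" "0 \<le> y" "y \<le> pi" "F (x, y) = (0, 0)" by blast
  have "\<sigma> \<noteq> 0" by (simp add: \<sigma>_def)
  then have h1: "V1 x (x + y) = 1/2" and h2: "V2 x (x + y) = 1/2" using xy(5) by (auto simp: F_def)
  have "y \<noteq> 0" using h1 V0[of x] by auto
  moreover have "y \<noteq> pi" using h1 Vpi[of x] by auto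
  ultimately have y: "0 < y" "y < pi" using xy(3,4) by auto
  have W1: "W \<mu>1 q x (x + y) = measure \<mu>1 UNIV / 2" using h1 T1 by (simp add: V1_def T1_def field_simps)
  have W2: "W \<mu>2 q x (x + y) = measure \<mu>2 UNIV / 2" using h2 T2 by (simp add: V2_def T2_def field_simps)
  define p :: "real^2" where "p = q + vector [cos x, sin x]"
  have pin: "nrm t \<bullet> (p - q) = sin (x - t)" for t
    by (simp add: p_def nrm_inner vector_2 sin_diff algebra_simps)
  have "sin y > 0" using sin_gt_zero[OF y] .
  then have "p \<in> line_set (ln q x)" "p \<notin> line_set (ln q (x + y))"
    by (auto simp: line_set_ln pin)
  then have ne: "line_set (ln q x) \<noteq> line_set (ln q (x + y))" by blast
  show ?thesis
    apply (rule exI[of _ "ln q x"], rule exI[of _ "ln q (x + y)"])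
    using ne bis[OF md1 W1] bis[OF md2 W2] nrm_nz
    by (simp add: oriented_line_def line_set_ln) (simp add: ln_def)
qed

end
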